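(* Let $\varphi$ be a propositional (Boolean) formula and let $W$ be a set of valuations. Then for every $w\in W$: $w\models\varphi$ if and only if $w\models\bigvee_{v\in\mathrm{base}(\varphi,W)}\bigwedge_{\ell\in v}\ell$.
   Context: Fix a set $\mathrm{Prop}$ of propositional atoms; a literal is $p$ or $\neg p$ for $p\in\mathrm{Prop}$. A valuation is a maximal consistent set of literals (identified with a truth assignment); $w\models\varphi$ means the valuation $w$ satisfies the Boolean formula $\varphi$. A subvaluation is a subset of a valuation. An atom $p$ is essential to $\varphi$ iff $p$ occurs in every formula classically equivalent to $\varphi$. Given a set $W$ of valuations, a subvaluation $v$ satisfies $\varphi$ modulo $W$ iff every $u\in W$ with $v\subseteq u$ satisfies $\varphi$; $v$ essentially satisfies $\varphi$ modulo $W$ iff it satisfies $\varphi$ modulo $W$ and every atom occurring (positively or negatively) in a literal of $v$ is essential to $\varphi$; $v$ is a prime subvaluation of $\varphi$ modulo $W$ iff $v$ essentially satisfies $\varphi$ modulo $W$ and no proper subset of $v$ does. $\mathrm{base}(\varphi,W)$ denotes the set of all prime subvaluations of $\varphi$ modulo $W$. *)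

theory Defs
  imports Main
begin

datatype 'a lit = Pos 'a | Neg 'a

datatype 'a form =
    Atom 'a | Top | Bot | Not "'a form"
  | And "'a form" "'a form" | Or "'a form" "'a form"
  | Imp "'a form" "'a form" | Iff "'a form" "'a form"

fun lit_atom :: "'a lit \<Rightarrow> 'a" where
  "lit_atom (Pos p) = p" | "lit_atom (Neg p) = p"

fun atoms :: "'a form \<Rightarrow> 'a set" where
  "atoms (Atom p) = {p}"
| "atoms Top = {}"
| "atoms Bot = {}"
| "atoms (Not f) = atoms f"
| "atoms (And f g) = atoms f \<union> atoms g"
| "atoms (Or f g) = atoms f \<union> atoms g"
| "atoms (Imp f g) = atoms f \<union> atoms g"
| "atoms (Iff f g) = atoms f \<union> atoms g"

definition consistent :: "'a lit set \<Rightarrow> bool" where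
  "consistent v \<longleftrightarrow> (\<forall>p. \<not> (Pos p \<in> v \<and> Neg p \<in> v))"

definition valuation :: "'a lit set \<Rightarrow> bool" where
  "valuation w \<longleftrightarrow> consistent w \<and> (\<forall>p. Pos p \<in> w \<or> Neg p \<in> w)"

definition subvaluation :: "'a lit set \<Rightarrow> bool" where
  "subvaluation v \<longleftrightarrow> (\<exists>w. valuation w \<and> v \<subseteq> w)"

fun sat :: "'a lit set \<Rightarrow> 'a form \<Rightarrow> bool" where
  "sat w (Atom p) = (Pos p \<in> w)"
| "sat w Top = True"
| "sat w Bot = False"
| "sat w (Not f) = (\<not> sat w f)"
| "sat w (And f g) = (sat w f \<and> sat w g)"
| "sat w (Or f g) = (sat w f \<or> sat w g)"
| "sat w (Imp f g) = (sat w f \<longrightarrow> sat w g)"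
| "sat w (Iff f g) = (sat w f \<longleftrightarrow> sat w g)"

fun sat_lit :: "'a lit set \<Rightarrow> 'a lit \<Rightarrow> bool" where
  "sat_lit w (Pos p) = sat w (Atom p)"
| "sat_lit w (Neg p) = sat w (Not (Atom p))"

definition equivalent :: "'a form \<Rightarrow> 'a form \<Rightarrow> bool" where
  "equivalent f g \<longleftrightarrow> (\<forall>w. valuation w \<longrightarrow> (sat w f \<longleftrightarrow> sat w g))"

definition essential :: "'a \<Rightarrow> 'a form \<Rightarrow> bool" where
  "essential p f \<longleftrightarrow> (\<forall>g. equivalent f g \<longrightarrow> p \<in> atoms g)"

definition sat_mod :: "'a lit set \<Rightarrow> 'a form \<Rightarrow> 'a lit set set \<Rightarrow> bool" where
  "sat_mod v f W \<longleftrightarrow> (\<forall>u\<in>W. v \<subseteq> u \<longrightarrow> sat u f)"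

definition ess_sat_mod :: "'a lit set \<Rightarrow> 'a form \<Rightarrow> 'a lit set set \<Rightarrow> bool" where
  "ess_sat_mod v f W \<longleftrightarrow> sat_mod v f W \<and> (\<forall>l\<in>v. essential (lit_atom l) f)"

definition prime_subval :: "'a lit set \<Rightarrow> 'a form \<Rightarrow> 'a lit set set \<Rightarrow> bool" where
  "prime_subval v f W \<longleftrightarrow> subvaluation v \<and> ess_sat_mod v f W
     \<and> (\<forall>v'. v' \<subset> v \<longrightarrow> \<not> ess_sat_mod v' f W)"

definition base :: "'a form \<Rightarrow> 'a lit set set \<Rightarrow> 'a lit set set" where
  "base f W = {v. prime_subval v f W}"

end

theory Submission
  imports Defs
begin

lemma sat_atoms:
  "\<forall>p\<in>atoms f. (Pos p \<in> w \<longleftrightarrow> Pos p \<in> u) \<Longrightarrow> sat w f = sat u f"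
  by (induction f) auto

definition setv :: "'a lit set \<Rightarrow> 'a \<Rightarrow> bool \<Rightarrow> 'a lit set" where
  "setv w p b = {l \<in> w. lit_atom l \<noteq> p} \<union> {if b then Pos p else Neg p}"

lemma setv_pos: "Pos q \<in> setv w p b \<longleftrightarrow> (if q = p then b else Pos q \<in> w)"
  unfolding setv_def by auto

lemma setv_val: "valuation w \<Longrightarrow> valuation (setv w p b)"
proof -
  assume v: "valuation w"
  have "consistent (setv w p b)"
    unfolding consistent_def
  proof (intro allI notI)
    fix q assume h: "Pos q \<in> setv w p b \<and> Neg q \<in> setv w p b"
    show False
    proof (cases "q = p")
      case True then show False using h by (cases b) (auto simp: setv_def)
    next
      case False then show False using h v by (auto simp: setv_def valuation_def consistent_def split: if_splits)
    qed
  qed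
  moreover have "\<forall>q. Pos q \<in> setv w p b \<or> Neg q \<in> setv w p b"
    using v by (auto simp: setv_def valuation_def)
  ultimately show ?thesis by (simp add: valuation_def)
qed

lemma ess_atoms: "essential p f \<Longrightarrow> p \<in> atoms f"
  unfolding essential_def equivalent_def by auto

lemma nonessential_flip:
  assumes "\<not> essential p f" "valuation w"
  shows "sat (setv w p b) f = sat w f"
proof -
  obtain g where g: "equivalent f g" "p \<notin> atoms g"
    using assms(1) unfolding essential_def by auto
  have "sat (setv w p b) g = sat w g"
    by (rule sat_atoms) (use g(2) in \<open>auto simp: setv_pos\<close>)
  thus ?thesis using g(1) setv_val[OF assms(2)] assms(2)
    unfolding equivalent_def by auto
qed

lemma agree_aux:
  assumes "finite S"
  shows "\<forall>w. valuation w \<longrightarrow> valuation u \<longrightarrow>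
     (\<forall>p\<in>atoms f. p \<notin> S \<longrightarrow> (Pos p \<in> w \<longleftrightarrow> Pos p \<in> u)) \<longrightarrow>
     (\<forall>p\<in>S. \<not> essential p f) \<longrightarrow> sat w f = sat u f"
  using assms
proof (induction S rule: finite_induct)
  case empty
  show ?case
  proof (intro allI impI)
    fix w assume "valuation w" "valuation u"
      "\<forall>p\<in>atoms f. p \<notin> {} \<longrightarrow> (Pos p \<in> w \<longleftrightarrow> Pos p \<in> u)"
    then show "sat w f = sat u f" by (intro sat_atoms) simp
  qed
next
  case (insert p S)
  show ?case
  proof (intro allI impI)
    fix w assume w: "valuation w" "valuation u"
      "\<forall>q\<in>atoms f. q \<notin> insert p S \<longrightarrow> (Pos q \<in> w \<longleftrightarrow> Pos q \<in> u)"
      "\<forall>q\<in>insert p S. \<not> essential q f"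
    let ?w = "setv w p (Pos p \<in> u)"
    have a1: "\<forall>q\<in>atoms f. q \<notin> S \<longrightarrow> (Pos q \<in> ?w \<longleftrightarrow> Pos q \<in> u)"
      using w(3) by (simp add: setv_pos)
    have a2: "\<forall>q\<in>S. \<not> essential q f" using w(4) by simp
    have "sat ?w f = sat u f"
      using insert.IH setv_val[OF w(1)] w(2) a1 a2 by blast
    moreover have "sat ?w f = sat w f"
      using nonessential_flip[OF _ w(1)] w(4) by simp
    ultimately show "sat w f = sat u f" by simp
  qed
qed

lemma agree_ess:
  assumes "valuation w" "valuation u"
    "\<forall>p. essential p f \<longrightarrow> (Pos p \<in> w \<longleftrightarrow> Pos p \<in> u)"
  shows "sat w f = sat u f"
proof -
  have fin: "finite {p \<in> atoms f. \<not> essential p f}"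
  proof -
    have "finite (atoms f)" by (induction f) auto
    thus ?thesis by simp
  qed
  have "\<forall>p\<in>atoms f. p \<notin> {p \<in> atoms f. \<not> essential p f} \<longrightarrow> (Pos p \<in> w \<longleftrightarrow> Pos p \<in> u)"
    using assms(3) by blast
  moreover have "\<forall>p\<in>{p \<in> atoms f. \<not> essential p f}. \<not> essential p f" by blast
  ultimately show ?thesis
    using agree_aux[OF fin, of u f] assms(1,2) by blast
qed

lemma val_neg: "valuation w \<Longrightarrow> Neg p \<in> w \<longleftrightarrow> Pos p \<notin> w"
  unfolding valuation_def consistent_def by metis

theorem theorem2:
  fixes \<phi> :: "'a form" and W :: "'a lit set set"
  assumes "\<forall>w\<in>W. valuation w"
  shows "\<forall>w\<in>W. sat w \<phi> \<longleftrightarrow> (\<exists>v\<in>base \<phi> W. \<forall>l\<in>v. sat_lit w l)"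
proof (intro ballI iffI)
  fix w assume wW: "w \<in> W" and sw: "sat w \<phi>"
  have vw: "valuation w" using assms wW by auto
  define v0 where "v0 = {l \<in> w. essential (lit_atom l) \<phi>}"
  have "v0 \<subseteq> Pos ` atoms \<phi> \<union> Neg ` atoms \<phi>"
  proof
    fix l assume "l \<in> v0"
    then have "lit_atom l \<in> atoms \<phi>" using ess_atoms v0_def by auto
    then show "l \<in> Pos ` atoms \<phi> \<union> Neg ` atoms \<phi>" by (cases l) auto
  qed
  moreover have "finite (atoms \<phi>)" by (induction \<phi>) auto
  ultimately have fv0: "finite v0" by (meson finite_Un finite_imageI finite_subset)
  have e0: "ess_sat_mod v0 \<phi> W"
    unfolding ess_sat_mod_def sat_mod_def
  proof (intro conjI ballI impI)
    fix u assume uW: "u \<in> W" and sub: "v0 \<subseteq> u"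
    have vu: "valuation u" using assms uW by auto
    have "\<forall>p. essential p \<phi> \<longrightarrow> (Pos p \<in> w \<longleftrightarrow> Pos p \<in> u)"
    proof (intro allI impI)
      fix p assume ep: "essential p \<phi>"
      show "Pos p \<in> w \<longleftrightarrow> Pos p \<in> u"
      proof (cases "Pos p \<in> w")
        case True
        then have "Pos p \<in> v0" using ep v0_def by auto
        then show ?thesis using True sub by auto
      next
        case False
        then have "Neg p \<in> v0" using ep v0_def val_neg[OF vw] by auto
        then show ?thesis using False sub val_neg[OF vu] by auto
      qed
    qed
    then show "sat u \<phi>" using agree_ess[OF vw vu] sw by auto
  qed (auto simp: v0_def)
  define S where "S = {v. v \<subseteq> v0 \<and> ess_sat_mod v \<phi> W}"
  have fS: "finite S" using fv0 unfolding S_def by simp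
  have "v0 \<in> S" using e0 S_def by auto
  then obtain v where vS: "v \<in> S" and vmin: "\<forall>x\<in>S. x \<le> v \<longrightarrow> x = v"
    using finite_has_minimal[OF fS] by blast
  have vw0: "v \<subseteq> w" using vS S_def v0_def by auto
  have "prime_subval v \<phi> W"
    unfolding prime_subval_def
  proof (intro conjI allI impI)
    show "subvaluation v" using vw0 vw subvaluation_def by auto
    show "ess_sat_mod v \<phi> W" using vS S_def by auto
    fix v' assume ps: "v' \<subset> v"
    show "\<not> ess_sat_mod v' \<phi> W"
    proof
      assume e: "ess_sat_mod v' \<phi> W"
      have "v' \<in> S" using ps vS e by (auto simp: S_def)
      then have "v' = v" using vmin ps by blast
      then show False using ps by simp
    qed
  qed
  moreover have "\<forall>l\<in>v. sat_lit w l"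
  proof
    fix l assume "l \<in> v"
    then have "l \<in> w" using vw0 by auto
    then show "sat_lit w l" using val_neg[OF vw] by (cases l) auto
  qed
  ultimately show "\<exists>v\<in>base \<phi> W. \<forall>l\<in>v. sat_lit w l" unfolding base_def by auto
next
  fix w assume wW: "w \<in> W" and ex: "\<exists>v\<in>base \<phi> W. \<forall>l\<in>v. sat_lit w l"
  have vw: "valuation w" using assms wW by auto
  then obtain v where vb: "v \<in> base \<phi> W" and sl: "\<forall>l\<in>v. sat_lit w l" using ex by auto
  have "v \<subseteq> w"
  proof
    fix l assume "l \<in> v"
    then show "l \<in> w" using sl val_neg[OF vw] by (cases l) auto
  qed
  moreover have "sat_mod v \<phi> W" using vb
    unfolding base_def prime_subval_def ess_sat_mod_def by blast
  ultimately show "sat w \<phi>" using wW unfolding sat_mod_def by blast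
qed

end
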